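(* Let $a_1,\dots,a_{m-1},c,b_1,\dots,b_{m-1}\in\mathbb C$ and $\bar u_2=y_1(a_1)\cdots y_{m-1}(a_{m-1})y_m(c)y_{m-1}(b_{m-1})\cdots y_1(b_1)$. Then for every $1\le l\le m-1$, $$r_l(\bar u_2):=\sum_{k=0}^{l}(-1)^k p_{l-k}(\bar u_2)\,p_{2m-1-l+k}(\bar u_2)=(a_1\cdots a_l)^2\,a_{l+1}\cdots a_{m-1}\,c\,b_{m-1}\cdots b_{l+1},$$ and consequently, when all $a_i,c,b_i$ are nonzero, $\dfrac{p_{l+1}p_{2m-1-l}}{r_l}(\bar u_2)$ equals $a_{l+1}+b_{l+1}$ if $l\le m-2$ and equals $c$ if $l=m-1$.
   Context: $m\ge2$. $E_{i,j}$ are the $2m\times2m$ matrix units; $f_i=E_{i+1,i}+E_{2m-i+1,2m-i}$ for $1\le i\le m-1$, $f_m=E_{m+1,m}$, $y_i(a)=\exp(af_i)$. For a $2m\times 2m$ matrix $g$, $p_k(g)=g_{2m,2m-k}$ for $0\le k\le 2m-1$. Empty products equal $1$. *)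

theory Defs
  imports Complex_Main "Jordan_Normal_Form.Matrix"
begin

text \<open>Matrices are 2m x 2m complex matrices of the Jordan_Normal_Form library (0-based
  indices internally); the paper's 1-based indices are translated explicitly.\<close>

definition Eunit :: "nat \<Rightarrow> nat \<Rightarrow> nat \<Rightarrow> complex mat" where
  "Eunit n i j = mat n n (\<lambda>(r, s). if r = i - 1 \<and> s = j - 1 then 1 else 0)"

definition fgen :: "nat \<Rightarrow> nat \<Rightarrow> complex mat" where
  "fgen m i = (if i < m
      then Eunit (2*m) (i+1) i + Eunit (2*m) (2*m - i + 1) (2*m - i)
      else Eunit (2*m) (m+1) m)"

definition mexp :: "complex mat \<Rightarrow> complex mat" where
  "mexp A = mat (dim_row A) (dim_col A) (\<lambda>(i, j). \<Sum>k. (A ^\<^sub>m k) $$ (i, j) / fact k)"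

definition yop :: "nat \<Rightarrow> nat \<Rightarrow> complex \<Rightarrow> complex mat" where
  "yop m i a = mexp (a \<cdot>\<^sub>m fgen m i)"

text \<open>p_k(g) = g_{2m,2m-k} (1-based).\<close>
definition pk :: "nat \<Rightarrow> nat \<Rightarrow> complex mat \<Rightarrow> complex" where
  "pk m k g = g $$ (2*m - 1, 2*m - 1 - k)"

definition mat_prod_list :: "nat \<Rightarrow> complex mat list \<Rightarrow> complex mat" where
  "mat_prod_list n Ms = foldr (*) Ms (1\<^sub>m n)"

definition ubar2 :: "nat \<Rightarrow> (nat \<Rightarrow> complex) \<Rightarrow> complex \<Rightarrow> (nat \<Rightarrow> complex) \<Rightarrow> complex mat" where
  "ubar2 m a c b = mat_prod_list (2*m)
     (map (\<lambda>i. yop m i (a i)) [1..<m] @ [yop m m c] @ map (\<lambda>i. yop m i (b i)) (rev [1..<m]))"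

definition rl :: "nat \<Rightarrow> nat \<Rightarrow> complex mat \<Rightarrow> complex" where
  "rl m l g = (\<Sum>k = 0..l. (-1) ^ k * pk m (l - k) g * pk m (2*m - 1 - l + k) g)"

end

theory Submission
  imports Defs
begin


definition fent :: "nat \<Rightarrow> nat \<Rightarrow> nat \<Rightarrow> nat \<Rightarrow> bool" where
  "fent m i r s = (if i < m then (r = i \<and> s = i - 1) \<or> (r = 2*m - i \<and> s = 2*m - i - 1)
                   else (r = m \<and> s = m - 1))"

lemma Eunit_carrier[simp]: "Eunit n i j \<in> carrier_mat n n"
  unfolding Eunit_def by simp

lemma fgen_carrier[simp]: "fgen m i \<in> carrier_mat (2*m) (2*m)"
  unfolding fgen_def by auto

lemma fgen_dims[simp]: "dim_row (fgen m i) = 2*m" "dim_col (fgen m i) = 2*m"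
  by (metis carrier_matD fgen_carrier)+

lemma fgen_index:
  assumes "1 \<le> i" "i \<le> m" "r < 2*m" "s < 2*m"
  shows "fgen m i $$ (r,s) = (if fent m i r s then 1 else 0)"
  using assms unfolding fgen_def fent_def Eunit_def by auto

lemma fent_nil:
  assumes "1 \<le> i" "i \<le> m"
  shows "\<not> (fent m i r k \<and> fent m i k s)"
  using assms unfolding fent_def by (auto split: if_splits)

lemma fgen_sq:
  assumes "1 \<le> i" "i \<le> m"
  shows "(x \<cdot>\<^sub>m fgen m i) * (x \<cdot>\<^sub>m fgen m i) = 0\<^sub>m (2*m) (2*m)"
proof (rule eq_matI)
  fix r s assume rs: "r < dim_row (0\<^sub>m (2*m) (2*m) :: complex mat)" "s < dim_col (0\<^sub>m (2*m) (2*m) :: complex mat)"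
  then have rs': "r < 2*m" "s < 2*m" by auto
  have "((x \<cdot>\<^sub>m fgen m i) * (x \<cdot>\<^sub>m fgen m i)) $$ (r,s)
      = (\<Sum>k \<in> {0..<2*m}. (x * (if fent m i r k then 1 else 0)) * (x * (if fent m i k s then 1 else 0)))"
    using rs' assms by (simp add: scalar_prod_def fgen_index)
  also have "\<dots> = 0"
    by (rule sum.neutral) (use fent_nil[OF assms] in auto)
  finally show "((x \<cdot>\<^sub>m fgen m i) * (x \<cdot>\<^sub>m fgen m i)) $$ (r,s) = 0\<^sub>m (2*m) (2*m) $$ (r,s)"
    using rs' by simp
qed auto

lemma pow_ge2:
  assumes "B \<in> carrier_mat n n" "B * B = 0\<^sub>m n n" "k \<ge> 2"
  shows "B ^\<^sub>m k = 0\<^sub>m n n"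
  using assms(3)
proof (induction k rule: dec_induct)
  case base
  have "B ^\<^sub>m 2 = 1\<^sub>m n * B * B" using assms(1) by (simp add: numeral_2_eq_2)
  also have "\<dots> = B * B" using assms(1) by simp
  finally show ?case using assms(2) by simp
next
  case (step k)
  then show ?case using assms(1) by simp
qed

lemma yop_eq:
  assumes "1 \<le> i" "i \<le> m"
  shows "yop m i x = 1\<^sub>m (2*m) + x \<cdot>\<^sub>m fgen m i"
proof -
  let ?B = "x \<cdot>\<^sub>m fgen m i"
  have Bc: "?B \<in> carrier_mat (2*m) (2*m)" by simp
  have z: "k \<ge> 2 \<Longrightarrow> ?B ^\<^sub>m k = 0\<^sub>m (2*m) (2*m)" for k
    by (rule pow_ge2[OF Bc fgen_sq[OF assms]])
  show ?thesis
  proof (rule eq_matI)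
    fix r s assume "r < dim_row (1\<^sub>m (2*m) + ?B)" "s < dim_col (1\<^sub>m (2*m) + ?B)"
    then have rs: "r < 2*m" "s < 2*m" by auto
    have "(\<Sum>k. (?B ^\<^sub>m k) $$ (r,s) / fact k) = (\<Sum>k\<in>{0,1}. (?B ^\<^sub>m k) $$ (r,s) / fact k)"
      by (rule suminf_finite) (use z rs in auto)
    also have "\<dots> = (1\<^sub>m (2*m) + ?B) $$ (r,s)" using rs by simp
    finally show "yop m i x $$ (r,s) = (1\<^sub>m (2*m) + ?B) $$ (r,s)"
      unfolding yop_def mexp_def using rs by simp
  qed (auto simp: yop_def mexp_def)
qed



definition rowop :: "(nat \<Rightarrow> complex) \<Rightarrow> complex mat \<Rightarrow> nat \<Rightarrow> complex" where
  "rowop w M = (\<lambda>s. if s < dim_col M then (\<Sum>r<dim_row M. w r * M $$ (r,s)) else 0)"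

lemma rowop_mult:
  assumes A: "A \<in> carrier_mat n n" and B: "B \<in> carrier_mat n n"
  shows "rowop w (A * B) = rowop (rowop w A) B"
proof
  fix s
  show "rowop w (A * B) s = rowop (rowop w A) B s"
  proof (cases "s < n")
    case True
    have e: "(A*B) $$ (r,s) = (\<Sum>k<n. A $$ (r,k) * B $$ (k,s))" if "r < n" for r
      using A B that True by (simp add: scalar_prod_def atLeast0LessThan)
    have "rowop w (A * B) s = (\<Sum>r<n. w r * (\<Sum>k<n. A $$ (r,k) * B $$ (k,s)))"
      using A B True e by (simp add: rowop_def)
    also have "\<dots> = (\<Sum>r<n. \<Sum>k<n. w r * A $$ (r,k) * B $$ (k,s))"
      by (simp add: sum_distrib_left mult.assoc)
    also have "\<dots> = (\<Sum>k<n. \<Sum>r<n. w r * A $$ (r,k) * B $$ (k,s))"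
      by (rule sum.swap)
    also have "\<dots> = (\<Sum>k<n. (\<Sum>r<n. w r * A $$ (r,k)) * B $$ (k,s))"
      by (simp add: sum_distrib_right)
    also have "\<dots> = rowop (rowop w A) B s"
      using A B True by (simp add: rowop_def)
    finally show ?thesis .
  next
    case False
    then show ?thesis using A B by (simp add: rowop_def)
  qed
qed

lemma rowop_one: "rowop w (1\<^sub>m n) = (\<lambda>s. if s < n then w s else 0)"
proof
  fix s show "rowop w (1\<^sub>m n) s = (if s < n then w s else 0)"
  proof (cases "s < n")
    case True
    have "(\<Sum>r<n. w r * 1\<^sub>m n $$ (r,s)) = (\<Sum>r<n. if r = s then w r else 0)"
      by (rule sum.cong) (use True in auto)
    also have "\<dots> = w s" using True by simp
    finally show ?thesis using True by (simp add: rowop_def)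
  qed (simp add: rowop_def)
qed

lemma rowop_restrict:
  assumes "M \<in> carrier_mat n n"
  shows "rowop (\<lambda>s. if s < n then w s else 0) M = rowop w M"
  using assms unfolding rowop_def by (auto intro!: sum.cong)

lemma rowop_restricted:
  assumes "M \<in> carrier_mat n n"
  shows "(\<lambda>s. if s < n then rowop w M s else 0) = rowop w M"
  using assms unfolding rowop_def by auto

lemma foldr_carrier:
  "\<forall>M\<in>set Ms. M \<in> carrier_mat n n \<Longrightarrow> foldr (*) Ms (1\<^sub>m n) \<in> carrier_mat n n"
  by (induction Ms) auto

lemma rowop_foldr:
  assumes "\<forall>M\<in>set Ms. M \<in> carrier_mat n n"
  shows "rowop w (foldr (*) Ms (1\<^sub>m n)) = fold (\<lambda>M v. rowop v M) Ms (\<lambda>s. if s < n then w s else 0)"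
  using assms
proof (induction Ms arbitrary: w)
  case Nil
  then show ?case by (simp add: rowop_one)
next
  case (Cons M Ms)
  have Mc: "M \<in> carrier_mat n n" using Cons.prems by simp
  have Fc: "foldr (*) Ms (1\<^sub>m n) \<in> carrier_mat n n" using Cons.prems foldr_carrier[of Ms n] by simp
  have "rowop w (foldr (*) (M # Ms) (1\<^sub>m n)) = rowop (rowop w M) (foldr (*) Ms (1\<^sub>m n))"
    using rowop_mult[OF Mc Fc] by simp
  also have "\<dots> = fold (\<lambda>M v. rowop v M) Ms (rowop w M)"
    using Cons.IH[of "rowop w M"] Cons.prems rowop_restricted[OF Mc] by simp
  also have "\<dots> = fold (\<lambda>M v. rowop v M) (M # Ms) (\<lambda>s. if s < n then w s else 0)"
    using rowop_restrict[OF Mc] by simp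
  finally show ?case .
qed

definition step :: "nat \<Rightarrow> nat \<Rightarrow> complex \<Rightarrow> (nat \<Rightarrow> complex) \<Rightarrow> nat \<Rightarrow> complex" where
  "step m i x w = (\<lambda>s. if s < 2*m then w s + x * (if i < m then
       (if s = i - 1 then w i else 0) + (if s = 2*m - i - 1 then w (2*m - i) else 0)
     else (if s = m - 1 then w m else 0)) else 0)"

lemma rowop_yop:
  assumes "1 \<le> i" "i \<le> m"
  shows "rowop w (yop m i x) = step m i x w"
proof
  fix s
  show "rowop w (yop m i x) s = step m i x w s"
  proof (cases "s < 2*m")
    case True
    have "rowop w (yop m i x) s = (\<Sum>r<2*m. w r * ((if r = s then 1 else 0) + x * (if fent m i r s then 1 else 0)))"
      using True assms by (simp add: rowop_def yop_eq fgen_index)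
    also have "\<dots> = (\<Sum>r<2*m. (if r = s then w r else 0)) + x * (\<Sum>r<2*m. (if fent m i r s then w r else 0))"
    proof -
      have "(\<Sum>r<2*m. w r * ((if r = s then 1 else 0) + x * (if fent m i r s then 1 else 0)))
          = (\<Sum>r<2*m. (if r = s then w r else 0) + x * (if fent m i r s then w r else 0))"
        by (rule sum.cong) (auto simp: algebra_simps)
      then show ?thesis by (simp add: sum.distrib sum_distrib_left)
    qed
    also have "(\<Sum>r<2*m. (if r = s then w r else 0)) = w s" using True by simp
    also have "(\<Sum>r<2*m. (if fent m i r s then w r else 0)) = (if i < m then
       (if s = i - 1 then w i else 0) + (if s = 2*m - i - 1 then w (2*m - i) else 0)
     else (if s = m - 1 then w m else 0))"
    proof (cases "i < m")
      case True
      show ?thesis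
      proof (cases "s = i - 1")
        case True
        then have "s \<noteq> 2*m - i - 1" using \<open>i < m\<close> assms by auto
        have "(\<Sum>r<2*m. (if fent m i r s then w r else 0)) = (\<Sum>r<2*m. (if r = i then w r else 0))"
          by (rule sum.cong) (use True \<open>i<m\<close> assms in \<open>auto simp: fent_def\<close>)
        then show ?thesis using True \<open>i<m\<close> \<open>s \<noteq> 2*m - i - 1\<close> by simp
      next
        case False
        show ?thesis
        proof (cases "s = 2*m - i - 1")
          case True
          have "(\<Sum>r<2*m. (if fent m i r s then w r else 0)) = (\<Sum>r<2*m. (if r = 2*m - i then w r else 0))"
            by (rule sum.cong) (use True \<open>i<m\<close> assms in \<open>auto simp: fent_def\<close>)
          then show ?thesis using True \<open>i<m\<close> False assms by simp
        next
          case False2: False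
          have "(\<Sum>r<2*m. (if fent m i r s then w r else 0)) = (\<Sum>r<2*m. 0)"
            by (rule sum.cong) (use False False2 \<open>i<m\<close> assms in \<open>auto simp: fent_def\<close>)
          then show ?thesis using False False2 \<open>i<m\<close> by simp
        qed
      qed
    next
      case False
      have "(\<Sum>r<2*m. (if fent m i r s then w r else 0)) = (\<Sum>r<2*m. (if r = m \<and> s = m - 1 then w r else 0))"
        by (rule sum.cong) (use False assms in \<open>auto simp: fent_def\<close>)
      also have "\<dots> = (if s = m - 1 then w m else 0)"
        using assms by (cases "s = m - 1") auto
      finally show ?thesis using False by simp
    qed
    finally show ?thesis using True by (simp add: step_def)
  next
    case False
    then show ?thesis using assms by (simp add: rowop_def step_def yop_eq)
  qed
qed



definition Ap :: "(nat \<Rightarrow> complex) \<Rightarrow> nat \<Rightarrow> complex" where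
  "Ap a k = (\<Prod>i = 1..k. a i)"

lemma Ap_0[simp]: "Ap a 0 = 1" by (simp add: Ap_def)
lemma Ap_Suc: "Ap a (Suc k) = Ap a k * a (Suc k)"
  by (simp add: Ap_def prod.nat_ivl_Suc' mult.commute)

definition S1 :: "nat \<Rightarrow> (nat \<Rightarrow> complex) \<Rightarrow> nat \<Rightarrow> nat \<Rightarrow> complex" where
  "S1 m a k = (\<lambda>s. if 2*m - 1 - k \<le> s \<and> s < 2*m then Ap a (2*m - 1 - s) else 0)"

lemma S1_step:
  assumes "Suc k \<le> m - 1"
  shows "step m (Suc k) (a (Suc k)) (S1 m a k) = S1 m a (Suc k)"
proof
  fix s
  show "step m (Suc k) (a (Suc k)) (S1 m a k) s = S1 m a (Suc k) s"
  proof (cases "s = 2*m - k - 2")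
    case True
    then have "2*m - 1 - s = Suc k" "2*m - 1 - (2*m - Suc k) = k" using assms by auto
    then show ?thesis using True assms
      by (auto simp: step_def S1_def Ap_Suc)
  next
    case False
    then show ?thesis using assms
      by (auto simp: step_def S1_def)
  qed
qed

lemma S1_fold:
  assumes "k \<le> m - 1"
  shows "fold (\<lambda>i v. step m i (a i) v) [1..<Suc k] (S1 m a 0) = S1 m a k"
  using assms
proof (induction k)
  case 0 then show ?case by simp
next
  case (Suc k)
  then show ?case using S1_step[OF Suc.prems] by simp
qed

definition S2 :: "nat \<Rightarrow> (nat \<Rightarrow> complex) \<Rightarrow> complex \<Rightarrow> nat \<Rightarrow> complex" where
  "S2 m a c = (\<lambda>s. if m \<le> s \<and> s < 2*m then Ap a (2*m - 1 - s)
      else if s = m - 1 then c * Ap a (m - 1) else 0)"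

lemma S2_step:
  assumes "m \<ge> 2"
  shows "step m m c (S1 m a (m - 1)) = S2 m a c"
proof
  fix s
  show "step m m c (S1 m a (m - 1)) s = S2 m a c s"
  proof (cases "s = m - 1")
    case True
    then have "2*m - 1 - m = m - 1" by auto
    then show ?thesis using True assms by (auto simp: step_def S1_def S2_def)
  next
    case False
    then show ?thesis using assms by (auto simp: step_def S1_def S2_def)
  qed
qed

definition P :: "nat \<Rightarrow> (nat \<Rightarrow> complex) \<Rightarrow> complex \<Rightarrow> (nat \<Rightarrow> complex) \<Rightarrow> nat \<Rightarrow> nat \<Rightarrow> complex" where
  "P m a c b i = (\<lambda>s. if m \<le> s \<and> s < 2*m then
       Ap a (2*m - 1 - s) + (if Suc i \<le> 2*m - 1 - s then b (2*m - 1 - s) * Ap a (2*m - 2 - s) else 0)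
     else if i \<le> s \<and> s < m then c * Ap a (m - 1) * (\<Prod>k = Suc s..m - 1. b k) else 0)"

lemma P_top: "m \<ge> 2 \<Longrightarrow> P m a c b (m - 1) = S2 m a c"
  by (auto simp: P_def S2_def fun_eq_iff)

lemma P_step:
  assumes "Suc i < m"
  shows "step m (Suc i) (b (Suc i)) (P m a c b (Suc i)) = P m a c b i"
proof
  fix s
  show "step m (Suc i) (b (Suc i)) (P m a c b (Suc i)) s = P m a c b i s"
  proof (cases "s = i")
    case True
    have pr: "(\<Prod>k = Suc i..m - 1. b k) = b (Suc i) * (\<Prod>k = Suc (Suc i)..m - 1. b k)"
      using assms by (simp add: prod.atLeast_Suc_atMost)
    show ?thesis using True assms pr by (auto simp: step_def P_def)
  next
    case False
    show ?thesis
    proof (cases "s = 2*m - i - 2")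
      case True
      then have e: "2*m - 1 - s = Suc i" "2*m - 2 - s = i" "2*m - 1 - (2*m - Suc i) = i"
        "2*m - Suc i - 1 = s" using assms by auto
      have "m \<le> s" "s < 2*m" using True assms by auto
      then show ?thesis using e False assms
        by (auto simp: step_def P_def Ap_Suc)
    next
      case False2: False
      show ?thesis using False False2 assms
        by (auto simp: step_def P_def)
    qed
  qed
qed

lemma P_fold:
  assumes "i < m" "m \<ge> 2"
  shows "fold (\<lambda>j v. step m j (b j) v) (rev [Suc i..<m]) (S2 m a c) = P m a c b i"
proof -
  have "\<forall>i. i < m \<longrightarrow> m - Suc i = d \<longrightarrow> fold (\<lambda>j v. step m j (b j) v) (rev [Suc i..<m]) (S2 m a c) = P m a c b i" for d
  proof (induction d)
    case 0
    show ?case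
    proof (intro allI impI)
      fix i assume "i < m" "m - Suc i = 0"
      then have "i = m - 1" by auto
      then show "fold (\<lambda>j v. step m j (b j) v) (rev [Suc i..<m]) (S2 m a c) = P m a c b i"
        using P_top[OF assms(2)] by simp
    qed
  next
    case (Suc d)
    show ?case
    proof (intro allI impI)
      fix i assume h: "i < m" "m - Suc i = Suc d"
      then have "Suc i < m" by auto
      have r: "rev [Suc i..<m] = rev [Suc (Suc i)..<m] @ [Suc i]"
        using \<open>Suc i < m\<close> by (simp add: upt_conv_Cons)
      have "fold (\<lambda>j v. step m j (b j) v) (rev [Suc (Suc i)..<m]) (S2 m a c) = P m a c b (Suc i)"
        using Suc.IH h by auto
      then show "fold (\<lambda>j v. step m j (b j) v) (rev [Suc i..<m]) (S2 m a c) = P m a c b i"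
        using r P_step[OF \<open>Suc i < m\<close>] by simp
    qed
  qed
  then show ?thesis using assms by blast
qed



lemma yop_carrier[simp]: "yop m i x \<in> carrier_mat (2*m) (2*m)"
  by (simp add: yop_def mexp_def)

lemma ubar2_row:
  assumes m: "m \<ge> 2" and s: "s < 2*m"
  shows "ubar2 m a c b $$ (2*m - 1, s) = P m a c b 0 s"
proof -
  define e where "e = (\<lambda>r::nat. if r = 2*m - 1 then (1::complex) else 0)"
  define Ms where "Ms = map (\<lambda>i. yop m i (a i)) [1..<m] @ [yop m m c] @ map (\<lambda>i. yop m i (b i)) (rev [1..<m])"
  have Msc: "\<forall>M\<in>set Ms. M \<in> carrier_mat (2*m) (2*m)" unfolding Ms_def by auto
  have U: "ubar2 m a c b = foldr (*) Ms (1\<^sub>m (2*m))" unfolding ubar2_def Ms_def mat_prod_list_def by simp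
  have Uc: "ubar2 m a c b \<in> carrier_mat (2*m) (2*m)" using U foldr_carrier[OF Msc] by simp
  have "rowop e (ubar2 m a c b) s = (\<Sum>r<2*m. (if r = 2*m - 1 then ubar2 m a c b $$ (r,s) else 0))"
  proof -
    have "\<And>r. (if r = 2*m - 1 then 1 else 0) * ubar2 m a c b $$ (r,s) = (if r = 2*m - 1 then ubar2 m a c b $$ (r,s) else 0)"
      by simp
    then show ?thesis using carrier_matD[OF Uc] s unfolding rowop_def e_def by presburger
  qed
  also have "\<dots> = ubar2 m a c b $$ (2*m - 1, s)" using m by simp
  finally have 1: "ubar2 m a c b $$ (2*m - 1, s) = rowop e (ubar2 m a c b) s" by simp
  have er: "(\<lambda>s. if s < 2*m then e s else 0) = S1 m a 0"
    using m by (auto simp: e_def S1_def fun_eq_iff)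
  have f1: "fold (\<lambda>M v. rowop v M) (map (\<lambda>i. yop m i (a i)) [1..<m]) (S1 m a 0) = S1 m a (m - 1)"
  proof -
    have "fold (\<lambda>M v. rowop v M) (map (\<lambda>i. yop m i (a i)) [1..<m]) (S1 m a 0)
        = fold (\<lambda>i v. step m i (a i) v) [1..<Suc (m - 1)] (S1 m a 0)"
      unfolding fold_map using m by (auto intro!: fold_cong simp: rowop_yop)
    also have "\<dots> = S1 m a (m - 1)" by (rule S1_fold) simp
    finally show ?thesis .
  qed
  have f2: "fold (\<lambda>M v. rowop v M) (map (\<lambda>i. yop m i (b i)) (rev [1..<m])) (S2 m a c) = P m a c b 0"
  proof -
    have "fold (\<lambda>M v. rowop v M) (map (\<lambda>i. yop m i (b i)) (rev [1..<m])) (S2 m a c)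
        = fold (\<lambda>j v. step m j (b j) v) (rev [Suc 0..<m]) (S2 m a c)"
      unfolding fold_map using m by (auto intro!: fold_cong simp: rowop_yop)
    also have "\<dots> = P m a c b 0" by (rule P_fold) (use m in auto)
    finally show ?thesis .
  qed
  have "rowop e (ubar2 m a c b) = fold (\<lambda>M v. rowop v M) Ms (S1 m a 0)"
    using U rowop_foldr[OF Msc, of e] er by simp
  also have "\<dots> = P m a c b 0"
    unfolding Ms_def fold_append using f1 f2 S2_step[OF m] m by (simp add: rowop_yop)
  finally show ?thesis using 1 by simp
qed

lemma pk_low:
  assumes "m \<ge> 2" "k \<le> m - 1"
  shows "pk m k (ubar2 m a c b) = Ap a k + (if 1 \<le> k then b k * Ap a (k - 1) else 0)"
proof -
  have "pk m k (ubar2 m a c b) = P m a c b 0 (2*m - 1 - k)"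
    unfolding pk_def using assms by (intro ubar2_row) auto
  also have "\<dots> = Ap a k + (if 1 \<le> k then b k * Ap a (k - 1) else 0)"
  proof -
    have "2*m - 1 - (2*m - 1 - k) = k" "2*m - 2 - (2*m - 1 - k) = k - 1" using assms by auto
    then show ?thesis using assms by (auto simp: P_def)
  qed
  finally show ?thesis .
qed

lemma pk_high:
  assumes "m \<ge> 2" "m \<le> k" "k \<le> 2*m - 1"
  shows "pk m k (ubar2 m a c b) = c * Ap a (m - 1) * (\<Prod>i = 2*m - k..m - 1. b i)"
proof -
  have "pk m k (ubar2 m a c b) = P m a c b 0 (2*m - 1 - k)"
    unfolding pk_def using assms by (intro ubar2_row) auto
  also have "\<dots> = c * Ap a (m - 1) * (\<Prod>i = 2*m - k..m - 1. b i)"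
  proof -
    have "Suc (2*m - 1 - k) = 2*m - k" using assms by auto
    then show ?thesis using assms by (auto simp: P_def)
  qed
  finally show ?thesis .
qed

lemma telescope0:
  assumes q: "\<And>s. q s = T s + (if s = 0 then 0 else T (s - 1))"
  shows "(\<Sum>k = 0..l. (-1) ^ k * q (l - k)) = (T l :: complex)"
proof (induction l)
  case 0 then show ?case using q[of 0] by simp
next
  case (Suc l)
  have "(\<Sum>k = 0..Suc l. (-1) ^ k * q (Suc l - k))
      = q (Suc l) + (\<Sum>k = 0..l. (-1) ^ Suc k * q (l - k))"
    by (subst sum.atLeast0_atMost_Suc_shift) simp
  also have "\<dots> = q (Suc l) - (\<Sum>k = 0..l. (-1) ^ k * q (l - k))"
    by (simp add: sum_negf)
  also have "\<dots> = T (Suc l)" using Suc.IH q[of "Suc l"] by simp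
  finally show ?case .
qed

lemma telescope:
  "(\<Sum>k = 0..l. (-1) ^ k * (T (l - k) + (if 1 \<le> l - k then T (l - k - 1) else 0))) = (T l :: complex)"
proof -
  have "(\<Sum>k = 0..l. (-1) ^ k * (T (l - k) + (if 1 \<le> l - k then T (l - k - 1) else 0)))
      = (\<Sum>k = 0..l. (-1) ^ k * (\<lambda>s. T s + (if s = 0 then 0 else T (s - 1))) (l - k))"
    by (rule sum.cong) auto
  also have "\<dots> = T l" by (rule telescope0) simp
  finally show ?thesis .
qed

lemma Ap_split: "l \<le> n \<Longrightarrow> Ap a n = Ap a l * (\<Prod>i = Suc l..n. a i)"
proof (induction n rule: dec_induct)
  case base then show ?case by simp
next
  case (step n)
  then show ?case by (simp add: Ap_Suc prod.nat_ivl_Suc')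
qed



theorem mainTheorem7:
  fixes m l :: nat and a b :: "nat \<Rightarrow> complex" and c :: complex
  assumes "m \<ge> 2" and "1 \<le> l" and "l \<le> m - 1"
  shows "rl m l (ubar2 m a c b) =
           (\<Prod>i = 1..l. a i) ^ 2 * (\<Prod>i = l+1..m-1. a i) * c * (\<Prod>i = l+1..m-1. b i)
       \<and> ((\<forall>i \<in> {1..m-1}. a i \<noteq> 0 \<and> b i \<noteq> 0) \<and> c \<noteq> 0 \<longrightarrow>
           pk m (l+1) (ubar2 m a c b) * pk m (2*m - 1 - l) (ubar2 m a c b) / rl m l (ubar2 m a c b)
             = (if l \<le> m - 2 then a (l+1) + b (l+1) else c))"
proof -
  let ?U = "ubar2 m a c b"
  define D where "D j = (\<Prod>i = j..m - 1. b i)" for j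
  define T where "T s = Ap a s * D (Suc s)" for s
  define cA where "cA = c * Ap a (m - 1)"
  have Dstep: "b s * D (Suc s) = D s" if "1 \<le> s" "s \<le> m - 1" for s
    using that unfolding D_def by (simp add: prod.atLeast_Suc_atMost)
  have tm: "(-1) ^ k * pk m (l - k) ?U * pk m (2*m - 1 - l + k) ?U
      = cA * ((-1) ^ k * (T (l - k) + (if 1 \<le> l - k then T (l - k - 1) else 0)))"
    if k: "k \<in> {0..l}" for k
  proof -
    have k': "k \<le> l" using k by simp
    have p1: "pk m (l - k) ?U = Ap a (l - k) + (if 1 \<le> l - k then b (l - k) * Ap a (l - k - 1) else 0)"
      using pk_low[of m "l - k"] assms k' by simp
    have e2: "2*m - (2*m - 1 - l + k) = Suc (l - k)" using assms k' by auto
    have p2: "pk m (2*m - 1 - l + k) ?U = cA * D (Suc (l - k))"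
      using pk_high[of m "2*m - 1 - l + k" a c b] assms k' e2 unfolding cA_def D_def by auto
    show ?thesis
    proof (cases "1 \<le> l - k")
      case True
      have "Suc (l - k - 1) = l - k" using True by simp
      then have "T (l - k - 1) = Ap a (l - k - 1) * D (l - k)" unfolding T_def by simp
      moreover have "b (l - k) * D (Suc (l - k)) = D (l - k)" using Dstep[of "l - k"] True assms k' by simp
      ultimately show ?thesis using True p1 p2 unfolding T_def
        by (simp add: algebra_simps) (metis (no_types, lifting) mult.assoc mult.left_commute)
    next
      case False
      then show ?thesis using p1 p2 unfolding T_def by (simp add: algebra_simps)
    qed
  qed
  have r: "rl m l ?U = cA * T l"
  proof -
    have "rl m l ?U = (\<Sum>k = 0..l. cA * ((-1) ^ k * (T (l - k) + (if 1 \<le> l - k then T (l - k - 1) else 0))))"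
      unfolding rl_def by (rule sum.cong) (use tm in \<open>auto simp: mult.assoc\<close>)
    also have "\<dots> = cA * T l" by (simp only: sum_distrib_left[symmetric] telescope)
    finally show ?thesis .
  qed
  have split: "Ap a (m - 1) = Ap a l * (\<Prod>i = Suc l..m - 1. a i)"
    using Ap_split assms by blast
  have part1: "rl m l ?U =
           (\<Prod>i = 1..l. a i) ^ 2 * (\<Prod>i = l+1..m-1. a i) * c * (\<Prod>i = l+1..m-1. b i)"
    unfolding r cA_def T_def D_def split by (simp add: Ap_def power2_eq_square algebra_simps)
  have part2: "pk m (l+1) ?U * pk m (2*m - 1 - l) ?U / rl m l ?U
             = (if l \<le> m - 2 then a (l+1) + b (l+1) else c)"
    if nz: "(\<forall>i \<in> {1..m-1}. a i \<noteq> 0 \<and> b i \<noteq> 0) \<and> c \<noteq> 0"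
  proof -
    have Apnz: "Ap a j \<noteq> 0" if "j \<le> m - 1" for j
      using nz that unfolding Ap_def by (auto simp: prod_zero_iff)
    have Dnz: "D j \<noteq> 0" if "1 \<le> j" for j
      using nz that unfolding D_def by (auto simp: prod_zero_iff)
    have cAnz: "cA \<noteq> 0" using nz Apnz[of "m - 1"] unfolding cA_def by simp
    have e2: "2*m - (2*m - 1 - l) = Suc l" using assms by auto
    have p2: "pk m (2*m - 1 - l) ?U = cA * D (Suc l)"
      using pk_high[of m "2*m - 1 - l" a c b] assms e2 unfolding cA_def D_def by auto
    have rr: "rl m l ?U = cA * Ap a l * D (Suc l)" using r unfolding T_def by simp
    show ?thesis
    proof (cases "l \<le> m - 2")
      case True
      have p1: "pk m (l+1) ?U = Ap a l * (a (Suc l) + b (Suc l))"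
        using pk_low[of m "l+1"] assms True by (simp add: Ap_Suc algebra_simps)
      have "Ap a l \<noteq> 0" using Apnz assms by simp
      moreover have "D (Suc l) \<noteq> 0" using Dnz by simp
      ultimately show ?thesis using True p1 p2 rr cAnz by (simp add: field_simps)
    next
      case False
      then have lm: "l = m - 1" using assms by simp
      then have "l + 1 = m" using assms by simp
      have Dm: "D (Suc l) = 1" unfolding D_def using lm assms by simp
      have p1: "pk m (l+1) ?U = cA" using pk_high[of m m a c b] assms \<open>l + 1 = m\<close> unfolding cA_def by simp
      have "Ap a l \<noteq> 0" using Apnz assms by simp
      then show ?thesis using False p1 p2 rr cAnz Dm lm unfolding cA_def by (simp add: field_simps)
    qed
  qed
  show ?thesis using part1 part2 by blast
qed


end
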